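(* Let $n\ge 1$, $P\ge 0$ and $\mathbf{h}\in\mathbb{R}^n$, and let $$\mathbf{G}=(1+P\|\mathbf{h}\|^2)\mathbf{I}-P\mathbf{h}\mathbf{h}^T .$$ Let $\mathbf{a}^*$ be any minimizer of $f(\mathbf{a})=\mathbf{a}^T\mathbf{G}\mathbf{a}$ over $\mathbf{a}\in\mathbb{Z}^n\setminus\{\mathbf{0}\}$. Then either $\mathbf{a}^*=\pm\mathbf{u}_i$ for some $i$, or there exists $x\in\mathbb{R}$ such that, elementwise, $$\mathbf{a}^*-\tfrac12\mathbf{1}<\mathbf{h}x<\mathbf{a}^*+\tfrac12\mathbf{1},$$ and consequently $\mathbf{a}^*=\lfloor \mathbf{h}x\rceil$ (componentwise rounding to the nearest integer).
   Context: $\|\cdot\|$ is the Euclidean norm, $\mathbf{I}$ the $n\times n$ identity, $\mathbf{1}$ the all-ones vector, $\mathbf{u}_i$ the $i$-th standard unit vector of $\mathbb{R}^n$. Vector inequalities are elementwise. The matrix $\mathbf{G}$ is positive definite (its eigenvalues are $1$ and $1+P\|\mathbf{h}\|^2$), so a minimizer exists. *)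

theory Defs
  imports "HOL-Analysis.Analysis"
begin

definition int_vec :: "real^'n \<Rightarrow> bool" where
  "int_vec a \<longleftrightarrow> (\<forall>i. a $ i \<in> \<int>)"

definition outer :: "real^'n \<Rightarrow> real^'n \<Rightarrow> real^'n^'n" where
  "outer u v = (\<chi> i j. u $ i * v $ j)"

definition Gmat :: "real \<Rightarrow> real^'n \<Rightarrow> real^'n^'n" where
  "Gmat P h = (1 + P * (norm h)\<^sup>2) *\<^sub>R mat 1 - P *\<^sub>R outer h h"

definition fq :: "real \<Rightarrow> real^'n \<Rightarrow> real^'n \<Rightarrow> real" where
  "fq P h a = a \<bullet> (Gmat P h *v a)"

definition round_vec :: "real^'n \<Rightarrow> real^'n" where
  "round_vec v = (\<chi> i. real_of_int (round (v $ i)))"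

end

theory Submission
  imports Defs
begin

lemma outer_mult: "outer u v *v a = (v \<bullet> a) *\<^sub>R u"
  by (simp add: vec_eq_iff outer_def matrix_vector_mult_def inner_vec_def
      sum_distrib_left sum_distrib_right mult.commute mult.left_commute)

lemma scal_mv: "(k *\<^sub>R M) *v (a::real^'n) = k *\<^sub>R (M *v a)"
  by (simp add: vec_eq_iff matrix_vector_mult_def sum_distrib_left mult.assoc)

lemma fq_eq: "fq P h a = (1 + P * (norm h)\<^sup>2) * (a \<bullet> a) - P * (h \<bullet> a)\<^sup>2"
  unfolding fq_def Gmat_def
  by (simp add: matrix_vector_mult_diff_rdistrib scal_mv outer_mult inner_diff_right
      inner_commute power2_eq_square)

lemma fq_step:
  fixes P :: real and h a :: "real^'n"
  assumes s2: "s * s = 1"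
  defines "c \<equiv> 1 + P * (norm h)\<^sup>2"
  assumes c: "c > 0"
  shows "fq P h (a - s *\<^sub>R axis i 1) - fq P h a
     = c * (1 - 2 * s * (a $ i - h $ i * (P * (h \<bullet> a) / c))) - P * (h $ i)\<^sup>2"
proof -
  have e1: "(a - s *\<^sub>R axis i 1) \<bullet> (a - s *\<^sub>R axis i 1) = a \<bullet> a - 2 * s * a $ i + 1"
    using s2 by (simp add: inner_diff_left inner_diff_right inner_axis inner_axis' inner_commute
        algebra_simps)
  have e2: "h \<bullet> (a - s *\<^sub>R axis i 1) = h \<bullet> a - s * h $ i"
    by (simp add: inner_diff_right inner_axis)
  show ?thesis
    unfolding fq_eq e1 e2 c_def[symmetric]
    using c s2 by (simp add: field_simps power2_eq_square)
qed

theorem theorem1: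
  fixes P :: real and h astar :: "real^'n"
  assumes "P \<ge> 0"
    and "int_vec astar" and "astar \<noteq> 0"
    and "\<forall>a. int_vec a \<and> a \<noteq> 0 \<longrightarrow> fq P h astar \<le> fq P h a"
  shows "(\<exists>i. astar = axis i 1 \<or> astar = - axis i 1) \<or>
         (\<exists>x::real. (\<forall>i. astar $ i - 1/2 < h $ i * x \<and> h $ i * x < astar $ i + 1/2)
                    \<and> astar = round_vec (x *\<^sub>R h))"
proof (cases "\<exists>i. astar = axis i 1 \<or> astar = - axis i 1")
  case True then show ?thesis by blast
next
  case False
  define c where "c = 1 + P * (norm h)\<^sup>2"
  have c: "c > 0" unfolding c_def using assms(1) by (simp add: add_pos_nonneg)
  define x where "x = P * (h \<bullet> astar) / c"
  have bnd: "\<bar>astar $ i - h $ i * x\<bar> < 1/2" for i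
  proof (rule ccontr)
    assume nb: "\<not> ?thesis"
    define d where "d = astar $ i - h $ i * x"
    define s :: real where "s = (if d \<ge> 0 then 1 else -1)"
    have s2: "s * s = 1" by (simp add: s_def)
    have sd: "s * d = \<bar>d\<bar>" by (simp add: s_def)
    define a' where "a' = astar - s *\<^sub>R axis i 1"
    have iv: "int_vec a'"
      using assms(2) unfolding int_vec_def a'_def
      by (auto simp: s_def axis_def)
    have nz: "a' \<noteq> 0"
    proof
      assume "a' = 0"
      then have "astar = s *\<^sub>R axis i 1" unfolding a'_def by simp
      then show False using False by (cases "d \<ge> 0") (auto simp: s_def axis_def vec_eq_iff)
    qed
    have st: "fq P h a' - fq P h astar = c * (1 - 2 * \<bar>d\<bar>) - P * (h $ i)\<^sup>2"
    proof -
      have "fq P h a' - fq P h astar = c * (1 - 2 * s * d) - P * (h $ i)\<^sup>2"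
        using fq_step[OF s2, of P h astar i] c unfolding a'_def c_def d_def x_def by simp
      also have "2 * s * d = 2 * \<bar>d\<bar>" using sd by simp
      finally show ?thesis .
    qed
    have ge: "fq P h a' - fq P h astar \<ge> 0" using assms(4) iv nz by auto
    have dd: "\<bar>d\<bar> \<ge> 1/2" using nb d_def by simp
    have p0: "P * (h $ i)\<^sup>2 \<ge> 0" using assms(1) by simp
    have "c * (1 - 2 * \<bar>d\<bar>) \<le> 0" using c dd by (simp add: mult_nonneg_nonpos)
    then have eq1: "c * (1 - 2 * \<bar>d\<bar>) = 0" and eq2: "P * (h $ i)\<^sup>2 = 0"
      using st ge p0 by linarith+
    have ad: "\<bar>d\<bar> = 1/2" using eq1 c by simp
    have "h $ i * x = 0" using eq2 unfolding x_def by auto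
    then have "\<bar>astar $ i\<bar> = 1/2" using ad d_def by auto
    moreover obtain k where k: "astar $ i = of_int k"
      using assms(2) unfolding int_vec_def by (meson Ints_cases)
    ultimately have r: "\<bar>real_of_int k\<bar> = 1/2" by metis
    have "k = 0 \<or> k \<ge> 1 \<or> k \<le> -1" by arith
    then show False
    proof (elim disjE)
      assume "k = 0" then show False using r by simp
    next
      assume "k \<ge> 1" then have "real_of_int k \<ge> 1" by simp
      then show False using r by linarith
    next
      assume "k \<le> -1" then have "real_of_int k \<le> -1" by simp
      then show False using r by linarith
    qed
  qed
  have "astar = round_vec (x *\<^sub>R h)"
  proof -
    have "round (h $ i * x) = round (astar $ i)" for i
    proof -
      obtain k where k: "astar $ i = of_int k"
        using assms(2) unfolding int_vec_def by (meson Ints_cases)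
      have "round (h $ i * x) = k"
        by (rule round_unique) (use bnd[of i] k in \<open>simp_all only: abs_less_iff; linarith\<close>)+
      then show ?thesis using k by simp
    qed
    moreover have "real_of_int (round (astar $ i)) = astar $ i" for i
      using assms(2) unfolding int_vec_def by (metis Ints_cases round_of_int)
    ultimately show ?thesis
      by (simp add: round_vec_def vec_eq_iff mult.commute)
  qed
  moreover have "\<forall>i. astar $ i - 1/2 < h $ i * x \<and> h $ i * x < astar $ i + 1/2"
  proof
    fix i show "astar $ i - 1/2 < h $ i * x \<and> h $ i * x < astar $ i + 1/2"
      using bnd[of i] by (simp only: abs_less_iff) linarith
  qed
  ultimately show ?thesis by blast
qed

end
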